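(* Let $\mathcal{F}$ be a family of finite lattices (considered up to isomorphism) that is closed under vertical sum and contains the singleton lattice. Let $f(n)$ and $f_{\mathrm{vi}}(n)$ be the numbers of $n$-element lattices and $n$-element vertically indecomposable lattices in $\mathcal{F}$, respectively. Let $N \ge 2$ be an integer, and let $\underline{f} \colon \mathbb{N}^+ \to \mathbb{N}^+$ be the sequence defined by $\underline{f}(1)=1$, \[ \underline{f}(n) = \sum_{k=2}^n f_{\mathrm{vi}}(k)\, \underline{f}(n-k+1) \quad \text{for } n=2,3,\ldots,N, \] and \[ \underline{f}(n) = \sum_{k=2}^N f_{\mathrm{vi}}(k)\, \underline{f}(n-k+1) \quad \text{for } n \ge N+1. \] Then $f(n) \ge \underline{f}(n)$ for all $n \ge 1$. Furthermore, the infinite sequence $\underline{f}$ is determined by $f_{\mathrm{vi}}(1), f_{\mathrm{vi}}(2), \ldots, f_{\mathrm{vi}}(N)$ through a homogeneous linear recurrence relation of order $N-1$ with constant coefficients.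
   Context: All lattices are finite, nonempty and unlabeled. The vertical sum $L+U$ of lattices $L$ and $U$ is obtained by identifying the top element of $L$ with the bottom element of $U$. A knot of a lattice $X$ is an element distinct from the top and bottom of $X$ that is comparable to every element of $X$; a lattice is vertically indecomposable if it has no knot. By convention the singleton lattice is counted as vertically indecomposable. *)

theory Defs
  imports Main
begin

type_synonym 'a ord_str = "'a set \<times> ('a \<times> 'a) set"

definition is_lub :: "'a ord_str \<Rightarrow> 'a \<Rightarrow> 'a \<Rightarrow> 'a \<Rightarrow> bool" where
  "is_lub L x y z \<longleftrightarrow> z \<in> fst L \<and> (x, z) \<in> snd L \<and> (y, z) \<in> snd L \<and>
     (\<forall>w\<in>fst L. (x, w) \<in> snd L \<and> (y, w) \<in> snd L \<longrightarrow> (z, w) \<in> snd L)"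

definition is_glb :: "'a ord_str \<Rightarrow> 'a \<Rightarrow> 'a \<Rightarrow> 'a \<Rightarrow> bool" where
  "is_glb L x y z \<longleftrightarrow> z \<in> fst L \<and> (z, x) \<in> snd L \<and> (z, y) \<in> snd L \<and>
     (\<forall>w\<in>fst L. (w, x) \<in> snd L \<and> (w, y) \<in> snd L \<longrightarrow> (w, z) \<in> snd L)"

definition fin_lattice :: "'a ord_str \<Rightarrow> bool" where
  "fin_lattice L \<longleftrightarrow> finite (fst L) \<and> fst L \<noteq> {} \<and>
     snd L \<subseteq> fst L \<times> fst L \<and> partial_order_on (fst L) (snd L) \<and>
     (\<forall>x\<in>fst L. \<forall>y\<in>fst L. (\<exists>z. is_lub L x y z) \<and> (\<exists>z. is_glb L x y z))"

definition lat_iso :: "'a ord_str \<Rightarrow> 'b ord_str \<Rightarrow> bool" where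
  "lat_iso L M \<longleftrightarrow> (\<exists>h. bij_betw h (fst L) (fst M) \<and>
     (\<forall>x\<in>fst L. \<forall>y\<in>fst L. (x, y) \<in> snd L \<longleftrightarrow> (h x, h y) \<in> snd M))"

definition lbot :: "'a ord_str \<Rightarrow> 'a" where
  "lbot L = (THE b. b \<in> fst L \<and> (\<forall>y\<in>fst L. (b, y) \<in> snd L))"

definition ltop :: "'a ord_str \<Rightarrow> 'a" where
  "ltop L = (THE t. t \<in> fst L \<and> (\<forall>y\<in>fst L. (y, t) \<in> snd L))"

text \<open>Vertical sum L + U: the top of L is identified with the bottom of U
  (we keep the top of L, represented as Inl, and drop the bottom of U).\<close>
definition vsum :: "'a ord_str \<Rightarrow> 'b ord_str \<Rightarrow> ('a + 'b) ord_str" where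
  "vsum L U =
    (Inl ` fst L \<union> Inr ` (fst U - {lbot U}),
     {(Inl x, Inl y) | x y. (x, y) \<in> snd L} \<union>
     {(Inr x, Inr y) | x y. (x, y) \<in> snd U \<and> x \<noteq> lbot U \<and> y \<noteq> lbot U} \<union>
     {(Inl x, Inr y) | x y. x \<in> fst L \<and> y \<in> fst U - {lbot U}})"

definition is_knot :: "'a ord_str \<Rightarrow> 'a \<Rightarrow> bool" where
  "is_knot L c \<longleftrightarrow> c \<in> fst L \<and> c \<noteq> ltop L \<and> c \<noteq> lbot L \<and>
     (\<forall>x\<in>fst L. (c, x) \<in> snd L \<or> (x, c) \<in> snd L)"

definition vert_indec :: "'a ord_str \<Rightarrow> bool" where
  "vert_indec L \<longleftrightarrow> \<not> (\<exists>c. is_knot L c)"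

definition count_classes :: "'a ord_str set \<Rightarrow> ('a ord_str \<Rightarrow> bool) \<Rightarrow> nat \<Rightarrow> nat" where
  "count_classes F P n =
     card ((\<lambda>L. {M \<in> F. lat_iso L M}) ` {L \<in> F. card (fst L) = n \<and> P L})"

definition fcount :: "'a ord_str set \<Rightarrow> nat \<Rightarrow> nat" where
  "fcount F n = count_classes F (\<lambda>_. True) n"

definition fvi :: "'a ord_str set \<Rightarrow> nat \<Rightarrow> nat" where
  "fvi F n = count_classes F vert_indec n"

text \<open>Hypotheses on the family: it consists of finite lattices (on the infinite
  carrier type nat, so every finite lattice has copies), is closed under
  isomorphism (a family of isomorphism classes), contains the singleton lattice,
  and is closed under vertical sum.\<close>
definition vsum_closed_family :: "nat ord_str set \<Rightarrow> bool" where
  "vsum_closed_family F \<longleftrightarrow>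
     (\<forall>L\<in>F. fin_lattice L) \<and>
     (\<forall>L\<in>F. \<forall>M. fin_lattice M \<and> lat_iso L M \<longrightarrow> M \<in> F) \<and>
     (\<exists>L\<in>F. card (fst L) = 1) \<and>
     (\<forall>L\<in>F. \<forall>U\<in>F. \<forall>X. fin_lattice X \<and> lat_iso X (vsum L U) \<longrightarrow> X \<in> F)"

end

theory Submission
  imports Defs
begin

lemmas po_simps = partial_order_on_def preorder_on_def refl_on_def antisym_on_def trans_on_def

lemma fl_D:
  assumes "fin_lattice L"
  shows "finite (fst L)" "fst L \<noteq> {}" "snd L \<subseteq> fst L \<times> fst L"
    "\<And>x. x \<in> fst L \<Longrightarrow> (x,x) \<in> snd L"
    "\<And>x y. (x,y) \<in> snd L \<Longrightarrow> (y,x) \<in> snd L \<Longrightarrow> x = y"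
    "\<And>x y z. (x,y) \<in> snd L \<Longrightarrow> (y,z) \<in> snd L \<Longrightarrow> (x,z) \<in> snd L"
    "\<And>x y. x \<in> fst L \<Longrightarrow> y \<in> fst L \<Longrightarrow> \<exists>z. is_lub L x y z"
    "\<And>x y. x \<in> fst L \<Longrightarrow> y \<in> fst L \<Longrightarrow> \<exists>z. is_glb L x y z"
  using assms unfolding fin_lattice_def po_simps by blast+

lemma fl_bot_ex:
  assumes L: "fin_lattice L"
  shows "\<exists>b\<in>fst L. \<forall>y\<in>fst L. (b,y) \<in> snd L"
proof -
  have "\<And>S. finite S \<Longrightarrow> S \<noteq> {} \<Longrightarrow> S \<subseteq> fst L \<Longrightarrow> \<exists>b\<in>fst L. \<forall>y\<in>S. (b,y) \<in> snd L"
  proof -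
    fix S assume "finite S" "S \<noteq> {}" "S \<subseteq> fst L"
    then show "\<exists>b\<in>fst L. \<forall>y\<in>S. (b,y) \<in> snd L"
    proof (induction S rule: finite_ne_induct)
      case (singleton x) then show ?case using fl_D(4)[OF L] by auto
    next
      case (insert x S)
      then obtain b where b: "b \<in> fst L" "\<forall>y\<in>S. (b,y) \<in> snd L" by auto
      obtain z where z: "is_glb L x b z" using fl_D(8)[OF L, of x b] insert b by auto
      show ?case using z b fl_D(6)[OF L] unfolding is_glb_def by blast
    qed
  qed
  from this[OF fl_D(1,2)[OF L]] show ?thesis by blast
qed

lemma fl_top_ex:
  assumes L: "fin_lattice L"
  shows "\<exists>b\<in>fst L. \<forall>y\<in>fst L. (y,b) \<in> snd L"
proof -
  have "\<And>S. finite S \<Longrightarrow> S \<noteq> {} \<Longrightarrow> S \<subseteq> fst L \<Longrightarrow> \<exists>b\<in>fst L. \<forall>y\<in>S. (y,b) \<in> snd L"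
  proof -
    fix S assume "finite S" "S \<noteq> {}" "S \<subseteq> fst L"
    then show "\<exists>b\<in>fst L. \<forall>y\<in>S. (y,b) \<in> snd L"
    proof (induction S rule: finite_ne_induct)
      case (singleton x) then show ?case using fl_D(4)[OF L] by auto
    next
      case (insert x S)
      then obtain b where b: "b \<in> fst L" "\<forall>y\<in>S. (y,b) \<in> snd L" by auto
      obtain z where z: "is_lub L x b z" using fl_D(7)[OF L, of x b] insert b by auto
      show ?case using z b fl_D(6)[OF L] unfolding is_lub_def by blast
    qed
  qed
  from this[OF fl_D(1,2)[OF L]] show ?thesis by blast
qed

lemma lbot:
  assumes L: "fin_lattice L"
  shows "lbot L \<in> fst L" "\<And>y. y \<in> fst L \<Longrightarrow> (lbot L, y) \<in> snd L"
proof -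
  obtain b where b: "b\<in>fst L" "\<forall>y\<in>fst L. (b,y) \<in> snd L" using fl_bot_ex[OF L] by blast
  have "lbot L = b" unfolding lbot_def
    by (rule the_equality) (use b fl_D(5)[OF L] in blast)+
  then show "lbot L \<in> fst L" "\<And>y. y \<in> fst L \<Longrightarrow> (lbot L, y) \<in> snd L" using b by auto
qed

lemma ltop:
  assumes L: "fin_lattice L"
  shows "ltop L \<in> fst L" "\<And>y. y \<in> fst L \<Longrightarrow> (y, ltop L) \<in> snd L"
proof -
  obtain b where b: "b\<in>fst L" "\<forall>y\<in>fst L. (y,b) \<in> snd L" using fl_top_ex[OF L] by blast
  have "ltop L = b" unfolding ltop_def
    by (rule the_equality) (use b fl_D(5)[OF L] in blast)+
  then show "ltop L \<in> fst L" "\<And>y. y \<in> fst L \<Longrightarrow> (y, ltop L) \<in> snd L" using b by auto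
qed

lemma lat_iso_refl: "lat_iso L L"
  unfolding lat_iso_def by (rule exI[of _ id]) auto

lemma lat_iso_sym: assumes "lat_iso L M" shows "lat_iso M L"
proof -
  obtain h where h: "bij_betw h (fst L) (fst M)"
    "\<forall>x\<in>fst L. \<forall>y\<in>fst L. (x, y) \<in> snd L \<longleftrightarrow> (h x, h y) \<in> snd M"
    using assms unfolding lat_iso_def by blast
  let ?g = "inv_into (fst L) h"
  have g: "bij_betw ?g (fst M) (fst L)" using h(1) by (rule bij_betw_inv_into)
  have "\<forall>x\<in>fst M. \<forall>y\<in>fst M. (x, y) \<in> snd M \<longleftrightarrow> (?g x, ?g y) \<in> snd L"
  proof (intro ballI)
    fix x y assume "x \<in> fst M" "y \<in> fst M"
    then have "?g x \<in> fst L" "?g y \<in> fst L" "h (?g x) = x" "h (?g y) = y"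
      using bij_betw_apply[OF g] bij_betw_inv_into_right[OF h(1)] by auto
    then show "(x, y) \<in> snd M \<longleftrightarrow> (?g x, ?g y) \<in> snd L" using h(2) by (metis (no_types))
  qed
  then show ?thesis unfolding lat_iso_def using g by blast
qed

lemma lat_iso_trans: assumes "lat_iso L M" "lat_iso M K" shows "lat_iso L K"
proof -
  obtain h where h: "bij_betw h (fst L) (fst M)"
    "\<forall>x\<in>fst L. \<forall>y\<in>fst L. (x, y) \<in> snd L \<longleftrightarrow> (h x, h y) \<in> snd M"
    using assms unfolding lat_iso_def by blast
  obtain g where g: "bij_betw g (fst M) (fst K)"
    "\<forall>x\<in>fst M. \<forall>y\<in>fst M. (x, y) \<in> snd M \<longleftrightarrow> (g x, g y) \<in> snd K"
    using assms unfolding lat_iso_def by blast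
  have "bij_betw (g \<circ> h) (fst L) (fst K)" using h(1) g(1) by (rule bij_betw_trans)
  moreover have "\<forall>x\<in>fst L. \<forall>y\<in>fst L. (x, y) \<in> snd L \<longleftrightarrow> ((g\<circ>h) x, (g\<circ>h) y) \<in> snd K"
    using h(2) g(2) bij_betw_apply[OF h(1)] by auto
  ultimately show ?thesis unfolding lat_iso_def by blast
qed

definition tmap :: "('a \<Rightarrow> 'b) \<Rightarrow> 'a ord_str \<Rightarrow> 'b ord_str" where
  "tmap h L = (h ` fst L, map_prod h h ` snd L)"

lemma tmap_key:
  assumes "inj_on h (fst L)" "snd L \<subseteq> fst L \<times> fst L" "x \<in> fst L" "y \<in> fst L"
  shows "(h x, h y) \<in> snd (tmap h L) \<longleftrightarrow> (x, y) \<in> snd L"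
proof
  assume "(h x, h y) \<in> snd (tmap h L)"
  then obtain a b where ab: "(a,b) \<in> snd L" "h a = h x" "h b = h y" unfolding tmap_def by auto
  then have "a \<in> fst L" "b \<in> fst L" using assms(2) by auto
  then have "a = x" "b = y" using ab assms inj_on_def by metis+
  then show "(x, y) \<in> snd L" using ab by simp
qed (auto simp: tmap_def)

lemma tmap_iso:
  assumes "inj_on h (fst L)" "snd L \<subseteq> fst L \<times> fst L"
  shows "lat_iso L (tmap h L)"
  unfolding lat_iso_def
proof (intro exI conjI)
  show "bij_betw h (fst L) (fst (tmap h L))" using assms(1) by (simp add: tmap_def bij_betw_def)
  show "\<forall>x\<in>fst L. \<forall>y\<in>fst L. ((x, y) \<in> snd L) = ((h x, h y) \<in> snd (tmap h L))"
    using tmap_key[OF assms] by blast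
qed

lemma tmap_fl:
  assumes inj: "inj_on h (fst L)" and L: "fin_lattice L"
  shows "fin_lattice (tmap h L)"
proof -
  note sub = fl_D(3)[OF L]
  note key = tmap_key[OF inj sub]
  have A': "fst (tmap h L) = h ` fst L" by (simp add: tmap_def)
  have r': "\<And>u v. (u,v) \<in> snd (tmap h L) \<Longrightarrow> \<exists>x\<in>fst L. \<exists>y\<in>fst L. u = h x \<and> v = h y \<and> (x,y) \<in> snd L"
    using sub unfolding tmap_def by auto
  have "finite (fst (tmap h L))" using fl_D(1)[OF L] A' by simp
  moreover have "fst (tmap h L) \<noteq> {}" using fl_D(2)[OF L] A' by simp
  moreover have "snd (tmap h L) \<subseteq> fst (tmap h L) \<times> fst (tmap h L)" using sub by (auto simp: tmap_def)
  moreover have "\<forall>u\<in>fst (tmap h L). (u,u) \<in> snd (tmap h L)"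
    using A' key fl_D(4)[OF L] by auto
  moreover have "\<forall>u v. (u,v) \<in> snd (tmap h L) \<longrightarrow> (v,u) \<in> snd (tmap h L) \<longrightarrow> u = v"
  proof (intro allI impI)
    fix u v assume "(u,v) \<in> snd (tmap h L)" "(v,u) \<in> snd (tmap h L)"
    then obtain x y where "x\<in>fst L" "y\<in>fst L" "u = h x" "v = h y" "(x,y) \<in> snd L" "(y,x) \<in> snd L"
      using r' key by metis
    then show "u = v" using fl_D(5)[OF L] by metis
  qed
  moreover have "\<forall>u v w. (u,v) \<in> snd (tmap h L) \<longrightarrow> (v,w) \<in> snd (tmap h L) \<longrightarrow> (u,w) \<in> snd (tmap h L)"
  proof (intro allI impI)
    fix u v w assume "(u,v) \<in> snd (tmap h L)" "(v,w) \<in> snd (tmap h L)"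
    then obtain x y z where "x\<in>fst L" "y\<in>fst L" "z \<in> fst L" "u = h x" "v = h y" "w = h z"
       "(x,y) \<in> snd L" "(y,z) \<in> snd L"
      using r' key by metis
    then show "(u,w) \<in> snd (tmap h L)" using fl_D(6)[OF L] key by metis
  qed
  moreover have "\<forall>u\<in>fst (tmap h L). \<forall>v\<in>fst (tmap h L). (\<exists>z. is_lub (tmap h L) u v z) \<and> (\<exists>z. is_glb (tmap h L) u v z)"
  proof (intro ballI conjI)
    fix u v assume "u \<in> fst (tmap h L)" "v \<in> fst (tmap h L)"
    then obtain x y where xy: "x\<in>fst L" "y\<in>fst L" "u = h x" "v = h y" using A' by auto
    obtain z where z: "is_lub L x y z" using fl_D(7)[OF L xy(1,2)] by blast
    have "is_lub (tmap h L) u v (h z)" unfolding is_lub_def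
    proof (intro conjI ballI impI)
      show "h z \<in> fst (tmap h L)" using z A' unfolding is_lub_def by auto
      show "(u, h z) \<in> snd (tmap h L)" "(v, h z) \<in> snd (tmap h L)"
        using z xy key unfolding is_lub_def by auto
      fix w assume "w \<in> fst (tmap h L)" "(u, w) \<in> snd (tmap h L) \<and> (v, w) \<in> snd (tmap h L)"
      then obtain w0 where "w0 \<in> fst L" "w = h w0" "(x,w0) \<in> snd L" "(y,w0) \<in> snd L"
        using A' key xy by auto
      then show "(h z, w) \<in> snd (tmap h L)" using z key unfolding is_lub_def by auto
    qed
    then show "\<exists>z. is_lub (tmap h L) u v z" by blast
    obtain z where z: "is_glb L x y z" using fl_D(8)[OF L xy(1,2)] by blast
    have "is_glb (tmap h L) u v (h z)" unfolding is_glb_def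
    proof (intro conjI ballI impI)
      show "h z \<in> fst (tmap h L)" using z A' unfolding is_glb_def by auto
      show "(h z, u) \<in> snd (tmap h L)" "(h z, v) \<in> snd (tmap h L)"
        using z xy key unfolding is_glb_def by auto
      fix w assume "w \<in> fst (tmap h L)" "(w, u) \<in> snd (tmap h L) \<and> (w, v) \<in> snd (tmap h L)"
      then obtain w0 where "w0 \<in> fst L" "w = h w0" "(w0,x) \<in> snd L" "(w0,y) \<in> snd L"
        using A' key xy by auto
      then show "(w, h z) \<in> snd (tmap h L)" using z key unfolding is_glb_def by auto
    qed
    then show "\<exists>z. is_glb (tmap h L) u v z" by blast
  qed
  ultimately show ?thesis unfolding fin_lattice_def po_simps by blast
qed

lemma iso_is_tmap:
  assumes "lat_iso L M" "snd L \<subseteq> fst L \<times> fst L" "snd M \<subseteq> fst M \<times> fst M"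
  shows "\<exists>h. inj_on h (fst L) \<and> M = tmap h L"
proof -
  obtain h where h: "bij_betw h (fst L) (fst M)"
    "\<forall>x\<in>fst L. \<forall>y\<in>fst L. (x, y) \<in> snd L \<longleftrightarrow> (h x, h y) \<in> snd M"
    using assms unfolding lat_iso_def by blast
  have 1: "fst M = h ` fst L" using h(1) by (simp add: bij_betw_def)
  have "snd M = map_prod h h ` snd L"
  proof
    show "snd M \<subseteq> map_prod h h ` snd L"
    proof
      fix p assume p: "p \<in> snd M"
      then obtain u v where "p = (u,v)" "u \<in> fst M" "v \<in> fst M" using assms(3) by auto
      then obtain x y where "x \<in> fst L" "y \<in> fst L" "u = h x" "v = h y" using 1 by auto
      then show "p \<in> map_prod h h ` snd L" using h(2) p \<open>p = (u,v)\<close> by force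
    qed
    show "map_prod h h ` snd L \<subseteq> snd M" using h(2) assms(2) by auto
  qed
  then have "M = tmap h L" using 1 by (simp add: tmap_def prod_eq_iff)
  then show ?thesis using h(1) bij_betw_def by blast
qed

lemma iso_fl:
  assumes "fin_lattice L" "lat_iso L M" "snd M \<subseteq> fst M \<times> fst M"
  shows "fin_lattice M"
  using iso_is_tmap[OF assms(2) fl_D(3)[OF assms(1)] assms(3)] tmap_fl assms(1) by blast

lemma vsum_simps[simp]:
  "Inl x \<in> fst (vsum L U) \<longleftrightarrow> x \<in> fst L"
  "Inr y \<in> fst (vsum L U) \<longleftrightarrow> y \<in> fst U \<and> y \<noteq> lbot U"
  "(Inl x, Inl x') \<in> snd (vsum L U) \<longleftrightarrow> (x, x') \<in> snd L"
  "(Inr y, Inr y') \<in> snd (vsum L U) \<longleftrightarrow> (y, y') \<in> snd U \<and> y \<noteq> lbot U \<and> y' \<noteq> lbot U"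
  "(Inl x, Inr y) \<in> snd (vsum L U) \<longleftrightarrow> x \<in> fst L \<and> y \<in> fst U \<and> y \<noteq> lbot U"
  "(Inr y, Inl x) \<notin> snd (vsum L U)"
  by (auto simp: vsum_def)

lemma vsum_ball:
  "(\<forall>w\<in>fst (vsum L U). P w) \<longleftrightarrow> (\<forall>x\<in>fst L. P (Inl x)) \<and> (\<forall>y\<in>fst U. y \<noteq> lbot U \<longrightarrow> P (Inr y))"
  by (auto simp: vsum_def)

lemma vsum_fl:
  assumes L: "fin_lattice L" and U: "fin_lattice U"
  shows "fin_lattice (vsum L U)"
proof -
  note l = fl_D[OF L] and u = fl_D[OF U]
  note bU = lbot[OF U] and tL = ltop[OF L]
  let ?V = "vsum L U"
  have fin: "finite (fst ?V)" using l(1) u(1) by (simp add: vsum_def)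
  have ne: "fst ?V \<noteq> {}" using l(2) by (auto simp: vsum_def)
  have sub: "snd ?V \<subseteq> fst ?V \<times> fst ?V" using l(3) u(3) by (auto simp: vsum_def)
  have refl: "\<forall>w\<in>fst ?V. (w,w) \<in> snd ?V" using l(4) u(4) by (simp add: vsum_ball)
  have anti: "\<forall>a b. (a,b) \<in> snd ?V \<longrightarrow> (b,a) \<in> snd ?V \<longrightarrow> a = b"
  proof (intro allI impI)
    fix a b assume "(a,b) \<in> snd ?V" "(b,a) \<in> snd ?V"
    then show "a = b" using l(5) u(5) by (cases a; cases b) auto
  qed
  have trans: "\<forall>a b c. (a,b) \<in> snd ?V \<longrightarrow> (b,c) \<in> snd ?V \<longrightarrow> (a,c) \<in> snd ?V"
  proof (intro allI impI)
    fix a b c assume ab: "(a,b) \<in> snd ?V" and bc: "(b,c) \<in> snd ?V"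
    have ra: "a \<in> fst ?V" "b \<in> fst ?V" "c \<in> fst ?V" using ab bc sub by auto
    show "(a,c) \<in> snd ?V"
      using ab bc ra by (cases a; cases b; cases c; simp; meson l(6) u(6))
  qed
  have lat: "\<forall>a\<in>fst ?V. \<forall>b\<in>fst ?V. (\<exists>z. is_lub ?V a b z) \<and> (\<exists>z. is_glb ?V a b z)"
  proof (intro ballI)
    fix a b assume a: "a \<in> fst ?V" and b: "b \<in> fst ?V"
    show "(\<exists>z. is_lub ?V a b z) \<and> (\<exists>z. is_glb ?V a b z)"
    proof (cases a)
      case (Inl x) note ax = this
      show ?thesis
      proof (cases b)
        case (Inl y)
        have x: "x \<in> fst L" "y \<in> fst L" using a b ax Inl by auto
        obtain z where z: "is_lub L x y z" using l(7)[OF x] by blast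
        obtain z' where z': "is_glb L x y z'" using l(8)[OF x] by blast
        have "is_lub ?V a b (Inl z)" using z x ax Inl unfolding is_lub_def by (simp add: vsum_ball)
        moreover have "is_glb ?V a b (Inl z')" using z' x ax Inl unfolding is_glb_def by (simp add: vsum_ball)
        ultimately show ?thesis by blast
      next
        case (Inr y)
        have x: "x \<in> fst L" "y \<in> fst U" "y \<noteq> lbot U" using a b ax Inr by auto
        have "is_lub ?V a b (Inr y)" using x ax Inr u(4) unfolding is_lub_def by (simp add: vsum_ball)
        moreover have "is_glb ?V a b (Inl x)" using x ax Inr l(4) unfolding is_glb_def by (simp add: vsum_ball)
        ultimately show ?thesis by blast
      qed
    next
      case (Inr x) note ax = this
      show ?thesis
      proof (cases b)
        case (Inl y)
        have x: "y \<in> fst L" "x \<in> fst U" "x \<noteq> lbot U" using a b ax Inl by auto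
        have "is_lub ?V a b (Inr x)" using x ax Inl u(4) unfolding is_lub_def by (simp add: vsum_ball)
        moreover have "is_glb ?V a b (Inl y)" using x ax Inl l(4) unfolding is_glb_def by (simp add: vsum_ball)
        ultimately show ?thesis by blast
      next
        case (Inr y)
        have x: "x \<in> fst U" "y \<in> fst U" "x \<noteq> lbot U" "y \<noteq> lbot U" using a b ax Inr by auto
        obtain z where z: "is_lub U x y z" using u(7)[OF x(1,2)] by blast
        have zb: "z \<noteq> lbot U" using z x u(5) bU unfolding is_lub_def by metis
        have "is_lub ?V a b (Inr z)" using z zb x ax Inr unfolding is_lub_def by (simp add: vsum_ball)
        moreover obtain z' where z': "is_glb U x y z'" using u(8)[OF x(1,2)] by blast
        have "\<exists>z. is_glb ?V a b z"
        proof (cases "z' = lbot U")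
          case True
          have nw: "\<forall>w\<in>fst U. w \<noteq> lbot U \<longrightarrow> \<not> ((w, x) \<in> snd U \<and> (w, y) \<in> snd U)"
            using z' True bU(2) u(5) unfolding is_glb_def by metis
          have "is_glb ?V a b (Inl (ltop L))"
            unfolding is_glb_def using x ax Inr tL nw by (simp add: vsum_ball)
          then show ?thesis by blast
        next
          case False
          have "is_glb ?V a b (Inr z')" using z' False x ax Inr unfolding is_glb_def by (simp add: vsum_ball)
          then show ?thesis by blast
        qed
        ultimately show ?thesis by blast
      qed
    qed
  qed
  show ?thesis unfolding fin_lattice_def po_simps using fin ne sub refl anti trans lat by blast
qed

lemma vsum_card:
  fixes L :: "'a ord_str" and U :: "'b ord_str"
  assumes L: "fin_lattice L" and U: "fin_lattice U"
  shows "card (fst (vsum L U)) = card (fst L) + card (fst U) - 1"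
proof -
  have "fst (vsum L U) = Inl ` fst L \<union> Inr ` (fst U - {lbot U})" by (simp add: vsum_def)
  moreover have "card (Inl ` fst L \<union> Inr ` (fst U - {lbot U}) :: ('a+'b) set) = card (Inl ` fst L :: ('a+'b) set) + card (Inr ` (fst U - {lbot U}) :: ('a+'b) set)"
    by (rule card_Un_disjoint) (use fl_D(1)[OF L] fl_D(1)[OF U] in auto)
  moreover have "card (Inl ` fst L :: ('a+'b) set) = card (fst L)" by (simp add: card_image)
  moreover have "card (Inr ` (fst U - {lbot U}) :: ('a+'b) set) = card (fst U) - 1"
    using lbot(1)[OF U] fl_D(1)[OF U] by (simp add: card_image)
  moreover have "card (fst U) \<ge> 1" using fl_D(1,2)[OF U] by (simp add: Suc_le_eq card_gt_0_iff)
  ultimately show ?thesis by simp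
qed

definition comp_all :: "'a ord_str \<Rightarrow> 'a \<Rightarrow> bool" where
  "comp_all X c \<longleftrightarrow> c \<in> fst X \<and> (\<forall>x\<in>fst X. (c,x) \<in> snd X \<or> (x,c) \<in> snd X)"

definition isleast :: "'a ord_str \<Rightarrow> 'a \<Rightarrow> bool" where
  "isleast X c \<longleftrightarrow> (\<forall>y\<in>fst X. (c,y) \<in> snd X)"

definition first_pt :: "'a ord_str \<Rightarrow> 'a \<Rightarrow> bool" where
  "first_pt X c \<longleftrightarrow> comp_all X c \<and> \<not> isleast X c \<and>
     (\<forall>d. comp_all X d \<and> \<not> isleast X d \<longrightarrow> (c,d) \<in> snd X)"

definition restr :: "'a ord_str \<Rightarrow> 'a set \<Rightarrow> 'a ord_str" where
  "restr X S = (S, snd X \<inter> S \<times> S)"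

definition dn :: "'a ord_str \<Rightarrow> 'a \<Rightarrow> 'a set" where
  "dn X c = {x\<in>fst X. (x,c) \<in> snd X}"

definition up :: "'a ord_str \<Rightarrow> 'a \<Rightarrow> 'a set" where
  "up X c = {x\<in>fst X. (c,x) \<in> snd X}"

locale isom =
  fixes X :: "'a ord_str" and Y :: "'b ord_str" and h
  assumes bij: "bij_betw h (fst X) (fst Y)"
    and ord: "\<And>x y. x \<in> fst X \<Longrightarrow> y \<in> fst X \<Longrightarrow> (x,y) \<in> snd X \<longleftrightarrow> (h x, h y) \<in> snd Y"
begin

lemma mem: "x \<in> fst X \<Longrightarrow> h x \<in> fst Y" by (rule bij_betw_apply[OF bij])
lemma surj: "u \<in> fst Y \<Longrightarrow> \<exists>x\<in>fst X. u = h x" using bij unfolding bij_betw_def by blast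
lemma ball_Y: "(\<forall>u\<in>fst Y. P u) \<longleftrightarrow> (\<forall>x\<in>fst X. P (h x))" using mem surj by blast

lemma comp_all: "c \<in> fst X \<Longrightarrow> comp_all Y (h c) \<longleftrightarrow> comp_all X c"
  unfolding comp_all_def using ord mem by (simp add: ball_Y)

lemma isleast: "c \<in> fst X \<Longrightarrow> isleast Y (h c) \<longleftrightarrow> isleast X c"
  unfolding isleast_def using ord by (simp add: ball_Y)

lemma first: assumes "first_pt X c" shows "first_pt Y (h c)"
proof -
  have c: "c \<in> fst X" using assms unfolding first_pt_def comp_all_def by blast
  have "\<forall>d. comp_all Y d \<and> \<not> isleast Y d \<longrightarrow> (h c, d) \<in> snd Y"
  proof (intro allI impI)
    fix d assume d: "comp_all Y d \<and> \<not> isleast Y d"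
    then obtain x where x: "x \<in> fst X" "d = h x" using surj unfolding comp_all_def by blast
    then have "comp_all X x \<and> \<not> isleast X x" using d comp_all isleast by simp
    then have "(c, x) \<in> snd X" using assms unfolding first_pt_def by blast
    then show "(h c, d) \<in> snd Y" using ord c x by simp
  qed
  then show ?thesis using assms c comp_all isleast unfolding first_pt_def by simp
qed

lemma restr_iso: assumes "S \<subseteq> fst X" shows "lat_iso (restr X S) (restr Y (h ` S))"
  unfolding lat_iso_def restr_def
proof (intro exI conjI)
  show "bij_betw h (fst (S, snd X \<inter> S \<times> S)) (fst (h ` S, snd Y \<inter> h ` S \<times> h ` S))"
    using bij_betw_subset[OF bij assms] by simp
  show "\<forall>x\<in>fst (S, snd X \<inter> S \<times> S). \<forall>y\<in>fst (S, snd X \<inter> S \<times> S).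
     ((x, y) \<in> snd (S, snd X \<inter> S \<times> S)) = ((h x, h y) \<in> snd (h ` S, snd Y \<inter> h ` S \<times> h ` S))"
    using ord assms by auto
qed

lemma dn_img: "c \<in> fst X \<Longrightarrow> h ` dn X c = dn Y (h c)"
  unfolding dn_def using ord mem surj by auto blast

lemma up_img: "c \<in> fst X \<Longrightarrow> h ` up X c = up Y (h c)"
  unfolding up_def using ord mem surj by auto blast

end

lemma lat_iso_isom: "lat_iso X Y \<Longrightarrow> \<exists>h. isom X Y h"
  unfolding lat_iso_def isom_def by blast

lemma first_unique:
  assumes "fin_lattice X" "first_pt X c" "first_pt X c'" shows "c = c'"
  using assms fl_D(5)[OF assms(1)] unfolding first_pt_def by blast

lemma top_ne_bot:
  assumes V: "fin_lattice V" and c: "card (fst V) \<ge> 2"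
  shows "ltop V \<noteq> lbot V"
proof
  assume e: "ltop V = lbot V"
  have "\<forall>x\<in>fst V. x = lbot V" using e lbot[OF V] ltop[OF V] fl_D(5)[OF V] by metis
  then have "fst V \<subseteq> {lbot V}" by blast
  then have "card (fst V) \<le> 1" using card_mono[of "{lbot V}" "fst V"] by simp
  then show False using c by simp
qed

lemma vsum_first:
  assumes V: "fin_lattice V" and R: "fin_lattice R" and vi: "vert_indec V" and c: "card (fst V) \<ge> 2"
  shows "first_pt (vsum V R) (Inl (ltop V))"
proof -
  note tb = top_ne_bot[OF V c]
  note bV = lbot[OF V] and tV = ltop[OF V]
  have ca: "comp_all (vsum V R) (Inl (ltop V))"
    unfolding comp_all_def using tV by (simp add: vsum_ball)
  have "(ltop V, lbot V) \<notin> snd V" using tV bV fl_D(5)[OF V] tb by metis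
  then have nl: "\<not> isleast (vsum V R) (Inl (ltop V))"
    unfolding isleast_def using bV by (auto simp: vsum_ball)
  have "\<forall>d. comp_all (vsum V R) d \<and> \<not> isleast (vsum V R) d \<longrightarrow> (Inl (ltop V), d) \<in> snd (vsum V R)"
  proof (intro allI impI)
    fix d assume d: "comp_all (vsum V R) d \<and> \<not> isleast (vsum V R) d"
    show "(Inl (ltop V), d) \<in> snd (vsum V R)"
    proof (cases d)
      case (Inl x)
      have x: "x \<in> fst V" using d Inl unfolding comp_all_def by simp
      have xc: "\<forall>y\<in>fst V. (x,y) \<in> snd V \<or> (y,x) \<in> snd V"
        using d Inl unfolding comp_all_def by (simp add: vsum_ball)
      have "x \<noteq> lbot V"
      proof
        assume "x = lbot V"
        then have "isleast (vsum V R) d" unfolding isleast_def using Inl bV by (simp add: vsum_ball)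
        then show False using d by blast
      qed
      moreover have "\<not> is_knot V x" using vi unfolding vert_indec_def by blast
      ultimately have "x = ltop V" using x xc unfolding is_knot_def by blast
      then show ?thesis using Inl fl_D(4)[OF V] tV by simp
    next
      case (Inr y)
      then show ?thesis using d tV unfolding comp_all_def by simp
    qed
  qed
  then show ?thesis unfolding first_pt_def using ca nl by blast
qed

lemma vsum_dn:
  assumes V: "fin_lattice V" shows "dn (vsum V R) (Inl (ltop V)) = Inl ` fst V"
  using ltop[OF V] unfolding dn_def by (auto simp: vsum_def)

lemma vsum_up:
  assumes V: "fin_lattice V" and R: "fin_lattice R"
  shows "up (vsum V R) (Inl (ltop V)) = (\<lambda>y. if y = lbot R then Inl (ltop V) else Inr y) ` fst R"
  using ltop[OF V] lbot[OF R] fl_D(5)[OF V] unfolding up_def by (auto simp: vsum_def image_iff)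

lemma iso_V:
  assumes V: "fin_lattice V"
  shows "lat_iso V (restr (vsum V R) (dn (vsum V R) (Inl (ltop V))))"
  unfolding vsum_dn[OF V] lat_iso_def restr_def
  by (rule exI[of _ Inl]) (auto simp: bij_betw_def fl_D(3)[OF V])

lemma iso_R:
  assumes V: "fin_lattice V" and R: "fin_lattice R"
  shows "lat_iso R (restr (vsum V R) (up (vsum V R) (Inl (ltop V))))"
  unfolding vsum_up[OF V R] lat_iso_def restr_def
proof (intro exI conjI)
  let ?h = "\<lambda>y. if y = lbot R then Inl (ltop V) else Inr y"
  show "bij_betw ?h (fst R) (fst (?h ` fst R, snd (vsum V R) \<inter> ?h ` fst R \<times> ?h ` fst R))"
    by (auto simp: bij_betw_def inj_on_def)
  show "\<forall>x\<in>fst R. \<forall>y\<in>fst R. ((x, y) \<in> snd R) =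
      ((?h x, ?h y) \<in> snd (?h ` fst R, snd (vsum V R) \<inter> ?h ` fst R \<times> ?h ` fst R))"
    using lbot[OF R] ltop[OF V] fl_D(4,5)[OF V] fl_D(4,5)[OF R] by auto
qed

lemma decomp:
  fixes V V' :: "'a ord_str" and R R' :: "'b ord_str"
  assumes V: "fin_lattice V" and R: "fin_lattice R" and vi: "vert_indec V" and c: "card (fst V) \<ge> 2"
    and V': "fin_lattice V'" and R': "fin_lattice R'" and vi': "vert_indec V'" and c': "card (fst V') \<ge> 2"
    and iso: "lat_iso (vsum V R) (vsum V' R')"
  shows "lat_iso V V' \<and> lat_iso R R'"
proof -
  obtain h where h: "isom (vsum V R) (vsum V' R') h" using lat_iso_isom[OF iso] by blast
  have f: "first_pt (vsum V R) (Inl (ltop V))" using vsum_first[OF V R vi c] .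
  have f': "first_pt (vsum V' R') (Inl (ltop V'))" using vsum_first[OF V' R' vi' c'] .
  have hc: "h (Inl (ltop V)) = Inl (ltop V')"
    using first_unique[OF vsum_fl[OF V' R'] isom.first[OF h f] f'] .
  have cin: "Inl (ltop V) \<in> fst (vsum V R)" using ltop(1)[OF V] by simp
  have s1: "dn (vsum V R) (Inl (ltop V)) \<subseteq> fst (vsum V R)" by (auto simp: dn_def)
  have s2: "up (vsum V R) (Inl (ltop V)) \<subseteq> fst (vsum V R)" by (auto simp: up_def)
  have e1: "lat_iso (restr (vsum V R) (dn (vsum V R) (Inl (ltop V)))) (restr (vsum V' R') (dn (vsum V' R') (Inl (ltop V'))))"
    using isom.restr_iso[OF h s1] isom.dn_img[OF h cin] hc by simp
  have e2: "lat_iso (restr (vsum V R) (up (vsum V R) (Inl (ltop V)))) (restr (vsum V' R') (up (vsum V' R') (Inl (ltop V'))))"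
    using isom.restr_iso[OF h s2] isom.up_img[OF h cin] hc by simp
  have "lat_iso V V'"
    using lat_iso_trans[OF iso_V[OF V, of R] lat_iso_trans[OF e1 lat_iso_sym[OF iso_V[OF V', of R']]]] .
  moreover have "lat_iso R R'"
    using lat_iso_trans[OF iso_R[OF V R] lat_iso_trans[OF e2 lat_iso_sym[OF iso_R[OF V' R']]]] .
  ultimately show ?thesis by blast
qed

definition cls :: "nat ord_str set \<Rightarrow> nat ord_str \<Rightarrow> nat ord_str set" where
  "cls F L = {M \<in> F. lat_iso L M}"

definition Cl :: "nat ord_str set \<Rightarrow> (nat ord_str \<Rightarrow> bool) \<Rightarrow> nat \<Rightarrow> nat ord_str set set" where
  "Cl F P n = cls F ` {L \<in> F. card (fst L) = n \<and> P L}"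

lemma cc: "count_classes F P n = card (Cl F P n)"
  by (simp add: count_classes_def Cl_def cls_def)

lemma cls_eq:
  assumes "L \<in> F" "M \<in> F" shows "cls F L = cls F M \<longleftrightarrow> lat_iso L M"
proof
  assume "cls F L = cls F M"
  moreover have "M \<in> cls F M" using assms lat_iso_refl by (simp add: cls_def)
  ultimately have "M \<in> cls F L" by simp
  then show "lat_iso L M" by (simp add: cls_def)
next
  assume "lat_iso L M"
  then show "cls F L = cls F M" unfolding cls_def using lat_iso_sym lat_iso_trans by blast
qed

lemma closedD:
  assumes "vsum_closed_family F"
  shows "\<And>L. L \<in> F \<Longrightarrow> fin_lattice L"
    "\<And>L M. L \<in> F \<Longrightarrow> fin_lattice M \<Longrightarrow> lat_iso L M \<Longrightarrow> M \<in> F"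
    "\<exists>L\<in>F. card (fst L) = 1"
    "\<And>L U X. L \<in> F \<Longrightarrow> U \<in> F \<Longrightarrow> fin_lattice X \<Longrightarrow> lat_iso X (vsum L U) \<Longrightarrow> X \<in> F"
  using assms unfolding vsum_closed_family_def by blast+

lemma Cl_finite:
  assumes Fc: "vsum_closed_family F" shows "finite (Cl F P n)"
proof -
  let ?T = "{L :: nat ord_str. fst L = {0..<n} \<and> snd L \<subseteq> {0..<n} \<times> {0..<n}}"
  have "?T \<subseteq> {{0..<n}} \<times> Pow ({0..<n} \<times> {0..<n})" by auto
  then have fT: "finite ?T" by (rule finite_subset) auto
  have "Cl F P n \<subseteq> cls F ` ?T"
  proof
    fix A assume "A \<in> Cl F P n"
    then obtain L where L: "L \<in> F" "card (fst L) = n" "A = cls F L" unfolding Cl_def by blast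
    have fl: "fin_lattice L" using closedD(1)[OF Fc L(1)] .
    obtain b where b: "bij_betw b (fst L) {0..<n}" using ex_bij_betw_finite_nat[OF fl_D(1)[OF fl]] L(2) by blast
    have inj: "inj_on b (fst L)" using b bij_betw_def by blast
    let ?M = "tmap b L"
    have i: "lat_iso L ?M" using tmap_iso[OF inj fl_D(3)[OF fl]] .
    have fm: "fin_lattice ?M" using tmap_fl[OF inj fl] .
    have MF: "?M \<in> F" using closedD(2)[OF Fc L(1) fm i] .
    have "fst ?M = {0..<n}" using b by (simp add: tmap_def bij_betw_def)
    then have "?M \<in> ?T" using fl_D(3)[OF fm] by simp
    moreover have "A = cls F ?M" using L(3) cls_eq[OF L(1) MF] i by simp
    ultimately show "A \<in> cls F ` ?T" by blast
  qed
  then show ?thesis using fT finite_surj by blast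
qed

definition rep :: "nat ord_str set \<Rightarrow> (nat ord_str \<Rightarrow> bool) \<Rightarrow> nat \<Rightarrow> nat ord_str set \<Rightarrow> nat ord_str" where
  "rep F P m A = (SOME L. L \<in> F \<and> card (fst L) = m \<and> P L \<and> A = cls F L)"

lemma rep:
  assumes "A \<in> Cl F P m"
  shows "rep F P m A \<in> F" "card (fst (rep F P m A)) = m" "P (rep F P m A)" "A = cls F (rep F P m A)"
proof -
  have "\<exists>L. L \<in> F \<and> card (fst L) = m \<and> P L \<and> A = cls F L" using assms unfolding Cl_def by blast
  from someI_ex[OF this] show "rep F P m A \<in> F" "card (fst (rep F P m A)) = m" "P (rep F P m A)" "A = cls F (rep F P m A)"
    unfolding rep_def by blast+
qed

definition enc :: "nat + nat \<Rightarrow> nat" where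
  "enc s = (case s of Inl x \<Rightarrow> 2 * x | Inr y \<Rightarrow> 2 * y + 1)"

lemma inj_enc: "inj enc"
  unfolding inj_def enc_def by (auto split: sum.splits) presburger+

definition vs :: "nat ord_str \<Rightarrow> nat ord_str \<Rightarrow> nat ord_str" where
  "vs V R = tmap enc (vsum V R)"

lemma vs_props:
  assumes V: "fin_lattice V" and R: "fin_lattice R"
  shows "fin_lattice (vs V R)" "lat_iso (vs V R) (vsum V R)"
    "card (fst (vs V R)) = card (fst V) + card (fst R) - 1"
proof -
  have inj: "inj_on enc (fst (vsum V R))" using inj_enc by (simp add: inj_on_def inj_def)
  note fv = vsum_fl[OF V R]
  show "fin_lattice (vs V R)" unfolding vs_def using tmap_fl[OF inj fv] .
  show "lat_iso (vs V R) (vsum V R)" unfolding vs_def using lat_iso_sym[OF tmap_iso[OF inj fl_D(3)[OF fv]]] .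
  show "card (fst (vs V R)) = card (fst V) + card (fst R) - 1"
    unfolding vs_def using vsum_card[OF V R] card_image[OF inj] by (simp add: tmap_def)
qed

lemma iso_card: "lat_iso L M \<Longrightarrow> card (fst L) = card (fst M)"
  unfolding lat_iso_def using bij_betw_same_card by blast

lemma lower:
  assumes Fc: "vsum_closed_family F" and n: "n \<ge> 2"
  shows "(\<Sum>k=2..n. fvi F k * fcount F (n - k + 1)) \<le> fcount F n"
proof -
  let ?D = "SIGMA k:{2..n}. Cl F vert_indec k \<times> Cl F (\<lambda>_. True) (n - k + 1)"
  define \<Phi> where "\<Phi> = (\<lambda>(k, A, B). cls F (vs (rep F vert_indec k A) (rep F (\<lambda>_. True) (n - k + 1) B)))"
  have cardD: "card ?D = (\<Sum>k=2..n. fvi F k * fcount F (n - k + 1))"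
    using Cl_finite[OF Fc] by (simp add: card_cartesian_product fvi_def fcount_def cc)
  have props: "rep F vert_indec k A \<in> F \<and> card (fst (rep F vert_indec k A)) = k \<and> vert_indec (rep F vert_indec k A)
      \<and> A = cls F (rep F vert_indec k A) \<and> fin_lattice (rep F vert_indec k A) \<and>
      rep F (\<lambda>_. True) (n-k+1) B \<in> F \<and> card (fst (rep F (\<lambda>_. True) (n-k+1) B)) = n-k+1
      \<and> B = cls F (rep F (\<lambda>_. True) (n-k+1) B) \<and> fin_lattice (rep F (\<lambda>_. True) (n-k+1) B)"
    if "(k, A, B) \<in> ?D" for k A B
    using that rep[of A F vert_indec k] rep[of B F "\<lambda>_. True" "n-k+1"] closedD(1)[OF Fc] by auto
  have img: "\<Phi> ` ?D \<subseteq> Cl F (\<lambda>_. True) n"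
  proof
    fix y assume "y \<in> \<Phi> ` ?D"
    then obtain k A B where kab: "(k, A, B) \<in> ?D" "y = \<Phi> (k, A, B)" by blast
    define V where "V = rep F vert_indec k A"
    define R where "R = rep F (\<lambda>_. True) (n-k+1) B"
    have p: "V \<in> F" "card (fst V) = k" "fin_lattice V" "R \<in> F" "card (fst R) = n-k+1" "fin_lattice R"
      using props[OF kab(1)] unfolding V_def R_def by blast+
    have k: "2 \<le> k" "k \<le> n" using kab(1) by auto
    have "vs V R \<in> F" using closedD(4)[OF Fc p(1) p(4) vs_props(1,2)[OF p(3) p(6)]] .
    moreover have "card (fst (vs V R)) = n" using vs_props(3)[OF p(3) p(6)] p(2,5) k by simp
    moreover have "y = cls F (vs V R)" using kab(2) unfolding \<Phi>_def V_def R_def by simp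
    ultimately show "y \<in> Cl F (\<lambda>_. True) n" unfolding Cl_def by blast
  qed
  have inj: "inj_on \<Phi> ?D"
  proof (rule inj_onI)
    fix a b assume a: "a \<in> ?D" and b: "b \<in> ?D" and e: "\<Phi> a = \<Phi> b"
    obtain k A B where ka: "a = (k, A, B)" by (cases a) auto
    obtain k' A' B' where kb: "b = (k', A', B')" by (cases b) auto
    define V where "V = rep F vert_indec k A"
    define R where "R = rep F (\<lambda>_. True) (n-k+1) B"
    define V' where "V' = rep F vert_indec k' A'"
    define R' where "R' = rep F (\<lambda>_. True) (n-k'+1) B'"
    have p: "V \<in> F" "card (fst V) = k" "fin_lattice V" "R \<in> F" "fin_lattice R" "vert_indec V"
       "A = cls F V" "B = cls F R"
      using props[of k A B] a ka unfolding V_def R_def by blast+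
    have p': "V' \<in> F" "card (fst V') = k'" "fin_lattice V'" "R' \<in> F" "fin_lattice R'" "vert_indec V'"
       "A' = cls F V'" "B' = cls F R'"
      using props[of k' A' B'] b kb unfolding V'_def R'_def by blast+
    have k: "2 \<le> k" "2 \<le> k'" using a b ka kb by auto
    have F1: "vs V R \<in> F" using closedD(4)[OF Fc p(1) p(4) vs_props(1,2)[OF p(3) p(5)]] .
    have F2: "vs V' R' \<in> F" using closedD(4)[OF Fc p'(1) p'(4) vs_props(1,2)[OF p'(3) p'(5)]] .
    have "cls F (vs V R) = cls F (vs V' R')" using e ka kb unfolding \<Phi>_def V_def R_def V'_def R'_def by simp
    then have "lat_iso (vs V R) (vs V' R')" using cls_eq[OF F1 F2] by simp
    then have "lat_iso (vsum V R) (vsum V' R')"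
      using lat_iso_trans[OF lat_iso_sym[OF vs_props(2)[OF p(3) p(5)]]] lat_iso_trans vs_props(2)[OF p'(3) p'(5)] by blast
    then have "lat_iso V V' \<and> lat_iso R R'"
      using decomp[OF p(3) p(5) p(6) _ p'(3) p'(5) p'(6)] p(2) p'(2) k by simp
    then have "k = k'" "A = A'" "B = B'"
      using iso_card[of V V'] p p' cls_eq[of V F V'] cls_eq[of R F R'] by auto
    then show "a = b" using ka kb by simp
  qed
  have "card ?D \<le> card (Cl F (\<lambda>_. True) n)"
    using card_inj_on_le[OF inj img Cl_finite[OF Fc]] .
  then show ?thesis using cardD by (simp add: fcount_def cc)
qed

lemma fcount1:
  assumes Fc: "vsum_closed_family F" shows "fcount F 1 \<ge> 1"
proof -
  obtain L where "L \<in> F" "card (fst L) = 1" using closedD(3)[OF Fc] by blast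
  then have "Cl F (\<lambda>_. True) 1 \<noteq> {}" unfolding Cl_def by blast
  then show ?thesis using Cl_finite[OF Fc] by (simp add: fcount_def cc Suc_le_eq card_gt_0_iff)
qed

theorem theorem2p6:
  fixes F :: "nat ord_str set" and N :: nat and fl :: "nat \<Rightarrow> nat"
  assumes "vsum_closed_family F"
    and "N \<ge> 2"
    and "fl 1 = 1"
    and "\<And>n. 2 \<le> n \<Longrightarrow> n \<le> N \<Longrightarrow> fl n = (\<Sum>k=2..n. fvi F k * fl (n - k + 1))"
    and "\<And>n. N + 1 \<le> n \<Longrightarrow> fl n = (\<Sum>k=2..N. fvi F k * fl (n - k + 1))"
  shows "(\<forall>n\<ge>1. fcount F n \<ge> fl n) \<and>
         (\<forall>n\<ge>N. fl n = (\<Sum>j=1..N-1. fvi F (j + 1) * fl (n - j)))"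
proof
  have "n \<ge> 1 \<longrightarrow> fl n \<le> fcount F n" for n
  proof (induction n rule: less_induct)
    case (less n)
    show ?case
    proof
      assume n1: "n \<ge> 1"
      show "fl n \<le> fcount F n"
      proof (cases "n = 1")
        case True
        then show ?thesis using assms(3) fcount1[OF assms(1)] by simp
      next
        case False
        then have n2: "n \<ge> 2" using n1 by simp
        have IH: "(\<Sum>k=2..n. fvi F k * fl (n - k + 1)) \<le> (\<Sum>k=2..n. fvi F k * fcount F (n - k + 1))"
        proof (rule sum_mono)
          fix k assume "k \<in> {2..n}"
          then have "n - k + 1 < n" "n - k + 1 \<ge> 1" by auto
          then show "fvi F k * fl (n - k + 1) \<le> fvi F k * fcount F (n - k + 1)"
            using less.IH by simp
        qed
        have "fl n \<le> (\<Sum>k=2..n. fvi F k * fl (n - k + 1))"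
        proof (cases "n \<le> N")
          case True then show ?thesis using assms(4)[OF n2] by simp
        next
          case False
          then have "fl n = (\<Sum>k=2..N. fvi F k * fl (n - k + 1))" using assms(5) by simp
          also have "\<dots> \<le> (\<Sum>k=2..n. fvi F k * fl (n - k + 1))"
            by (rule sum_mono2) (use False in auto)
          finally show ?thesis .
        qed
        then show ?thesis using IH lower[OF assms(1) n2] by linarith
      qed
    qed
  qed
  then show "\<forall>n\<ge>1. fcount F n \<ge> fl n" by blast
next
  show "\<forall>n\<ge>N. fl n = (\<Sum>j=1..N-1. fvi F (j + 1) * fl (n - j))"
  proof (intro allI impI)
    fix n assume n: "n \<ge> N"
    have "fl n = (\<Sum>k=2..N. fvi F k * fl (n - k + 1))"
    proof (cases "n = N")
      case True then show ?thesis using assms(2,4) by simp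
    next
      case False then show ?thesis using assms(5) n by simp
    qed
    also have "\<dots> = (\<Sum>j=1..N-1. fvi F (Suc j) * fl (n - Suc j + 1))"
    proof -
      have "{2..N} = {Suc 1..Suc (N-1)}" using assms(2) by simp
      then show ?thesis by (simp only: sum.shift_bounds_cl_Suc_ivl)
    qed
    also have "\<dots> = (\<Sum>j=1..N-1. fvi F (j + 1) * fl (n - j))"
    proof (rule sum.cong)
      fix j assume "j \<in> {1..N-1}"
      then have "n - Suc j + 1 = n - j" using n assms(2) by auto
      then show "fvi F (Suc j) * fl (n - Suc j + 1) = fvi F (j + 1) * fl (n - j)" by simp
    qed simp
    finally show "fl n = (\<Sum>j=1..N-1. fvi F (j + 1) * fl (n - j))" .
  qed
qed

end
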